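(* Let $\chi>0$, $\phi\in C^1(\mathbb{R})$ with $\phi'>0$, $\phi(0)>0$, and $g\in C^1([0,\infty))$ positive with exactly one $\beta>0$ such that $g'<0$ on $[0,\beta)$ and $g'>0$ on $(\beta,\infty)$. Let $g(\beta)<u_-<\min\{g(0),\lim_{V\to\infty}g(V)\}$ and $0<v_+<\beta<v_-$ with $g(v_\pm)=u_-$. Define $J(V)=V(g(V)-u_-)$ on $[0,v_+]$, $Q(V)=(v_--V)^2\inf_{z\in(V,v_-]}g'(z)$ on $(\beta,v_-)$, $$s_1:=\chi\Big(1-\frac{u_-}{g(\beta)}\Big)^{-1}\Big[\phi\Big(-\sqrt{\tfrac{1}{v_+}\textstyle\int_0^{v_+}J}\Big)-\frac{u_-\phi(0)}{g(\beta)}\Big],\quad s_2:=\chi\Big(1-\frac{u_-}{g(0)}\Big)^{-1}\Big[\phi\Big(\sqrt{\tfrac{1}{v_--\beta}\textstyle\int_\beta^{v_-}Q}\Big)-\frac{u_-\phi(0)}{g(0)}\Big],$$ $s_*=\min\{s_1,s_2\}$, and $B(V)=\frac{s}{\chi}+\frac{u_-}{g(V)}\big(\phi(0)-\frac{s}{\chi}\big)$. If $\chi\phi(0)<s<s_*$, then there exist $v_*\in(0,v_+)$ and $v^*\in(\beta,v_-)$ such that $-\sqrt{J(v_* )}<\phi^{-1}(B(\beta))<0$ and $0<\phi^{-1}(B(0))<\sqrt{Q(v^* )}$. *)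

theory Defs
  imports "HOL-Analysis.Analysis"
begin

end

theory Submission
  imports Defs
begin

lemma avg_bound:
  fixes f :: "real \<Rightarrow> real"
  assumes ab: "a < b" and C: "C \<ge> 0" and le: "\<And>x. x \<in> {a<..b} \<Longrightarrow> f x \<le> C"
  shows "integral {a..b} f \<le> C * (b - a)"
proof -
  define h where "h = (\<lambda>x. if x = a then 0 else f x)"
  have eq: "integral {a..b} f = integral {a..b} h"
    by (rule integral_spike[of "{a}"]) (auto simp: h_def)
  have hle: "\<And>x. x \<in> {a..b} \<Longrightarrow> h x \<le> C" using le C by (auto simp: h_def)
  show ?thesis
  proof (cases "h integrable_on {a..b}")
    case True
    have "integral {a..b} h \<le> integral {a..b} (\<lambda>_. C)"
      by (rule integral_le[OF True]) (auto intro: hle)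
    also have "\<dots> = C * (b - a)" using ab by simp
    finally show ?thesis using eq by simp
  next
    case False
    then have "integral {a..b} h = 0" by (simp add: not_integrable_integral)
    then show ?thesis using eq ab C by simp
  qed
qed

theorem proposition2p10:
  fixes chi s beta um vp vm :: real
    and phi phi' g g' :: "real \<Rightarrow> real"
    and L :: ereal
  assumes chi_pos: "chi > 0"
    and phi_deriv: "\<And>x. (phi has_real_derivative phi' x) (at x)"
    and phi'_cont: "continuous_on UNIV phi'"
    and phi'_pos: "\<And>x. phi' x > 0"
    and phi0_pos: "phi 0 > 0"
    and g_deriv: "\<And>x. x \<ge> 0 \<Longrightarrow> (g has_real_derivative g' x) (at x within {0..})"
    and g'_cont: "continuous_on {0..} g'"
    and g_pos: "\<And>x. x \<ge> 0 \<Longrightarrow> g x > 0"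
    and beta_pos: "beta > 0"
    and g'_neg: "\<And>x. 0 \<le> x \<Longrightarrow> x < beta \<Longrightarrow> g' x < 0"
    and g'_pos: "\<And>x. beta < x \<Longrightarrow> g' x > 0"
    and g_lim: "((\<lambda>V. ereal (g V)) \<longlongrightarrow> L) at_top"
    and um_low: "g beta < um"
    and um_up0: "um < g 0"
    and um_upL: "ereal um < L"
    and vp: "0 < vp" "vp < beta" "g vp = um"
    and vm: "beta < vm" "g vm = um"
  defines "J \<equiv> \<lambda>V. V * (g V - um)"
    and "Q \<equiv> \<lambda>V. (vm - V)\<^sup>2 * Inf (g' ` {V<..vm})"
    and "s1 \<equiv> chi * inverse (1 - um / g beta) *
               (phi (- sqrt (integral {0..vp} (\<lambda>V. V * (g V - um)) / vp)) - um * phi 0 / g beta)"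
    and "s2 \<equiv> chi * inverse (1 - um / g 0) *
               (phi (sqrt (integral {beta..vm} (\<lambda>V. (vm - V)\<^sup>2 * Inf (g' ` {V<..vm})) / (vm - beta))) - um * phi 0 / g 0)"
    and "B \<equiv> \<lambda>V. s / chi + um / g V * (phi 0 - s / chi)"
  assumes s_low: "chi * phi 0 < s"
    and s_up: "s < min s1 s2"
  shows "\<exists>v_low \<in> {0<..<vp}. \<exists>v_up \<in> {beta<..<vm}.
           - sqrt (J v_low) < inv phi (B beta) \<and> inv phi (B beta) < 0 \<and>
           0 < inv phi (B 0) \<and> inv phi (B 0) < sqrt (Q v_up)"
proof -
  have smono: "phi x < phi y" if "x < y" for x y
    using DERIV_pos_imp_increasing[OF that] phi_deriv phi'_pos by blast
  have inj: "inj phi"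
  proof -
    have "strict_mono phi" by (rule strict_monoI) (rule smono)
    thus ?thesis by (rule strict_mono_imp_inj_on)
  qed
  have cont: "continuous_on A phi" for A
    using phi_deriv by (meson DERIV_isCont continuous_at_imp_continuous_on)
  have ivt: "\<exists>x. a < x \<and> x < b \<and> inv phi y = x" if ay: "phi a < y" "y < phi b" for a b y
  proof -
    have "a < b" using that smono by (metis linorder_not_less order.strict_trans order_le_less)
    obtain x where x: "a \<le> x" "x \<le> b" "phi x = y"
      using IVT'[of phi a y b, OF _ _ _ cont] ay \<open>a < b\<close> by (meson less_imp_le)
    have "a < x" "x < b" using x ay by (metis order_le_less less_irrefl)+
    moreover have "inv phi y = x" using x inv_f_f[OF inj] by metis
    ultimately show ?thesis by blast
  qed
  define k where "k = s / chi"
  have kgt: "k > phi 0" using s_low chi_pos by (simp add: k_def field_simps)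
  have gb: "g beta > 0" and g0: "g 0 > 0" using g_pos beta_pos by auto
  have um_pos: "um > 0" using gb um_low by simp
  define I1 where "I1 = integral {0..vp} (\<lambda>V. V * (g V - um))"
  define a where "a = - sqrt (I1 / vp)"
  define r where "r = um / g beta"
  have r1: "r > 1" using um_low gb by (simp add: r_def field_simps)
  have Bb: "B beta = (1 - r) * k + r * phi 0" by (simp add: B_def k_def r_def algebra_simps)
  have "s < s1" using s_up by simp
  hence "k < inverse (1 - r) * (phi a - r * phi 0)"
    using chi_pos by (simp add: s1_def k_def r_def a_def I1_def field_simps)
  hence "(1 - r) * k > phi a - r * phi 0"
    using r1 by (simp add: field_simps)
  hence Bb1: "phi a < B beta" using Bb by simp
  have "(1 - r) * (k - phi 0) < 0" using r1 kgt by (simp add: mult_neg_pos)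
  hence Bb2: "B beta < phi 0" using Bb by (simp add: algebra_simps)
  obtain y where y: "a < y" "y < 0" "inv phi (B beta) = y" using ivt[OF Bb1 Bb2] by blast
  have "\<exists>v\<in>{0<..<vp}. - sqrt (J v) < y"
  proof (rule ccontr)
    assume "\<not> ?thesis"
    hence H: "\<And>v. v \<in> {0<..<vp} \<Longrightarrow> sqrt (J v) \<le> - y" by force
    have "\<And>v. v \<in> {0<..vp} \<Longrightarrow> v * (g v - um) \<le> y\<^sup>2"
    proof -
      fix v assume v: "v \<in> {0<..vp}"
      show "v * (g v - um) \<le> y\<^sup>2"
      proof (cases "v = vp")
        case True then show ?thesis using vp by simp
      next
        case False
        hence "sqrt (J v) \<le> - y" using H v by auto
        hence "J v \<le> (- y)\<^sup>2" by (rule sqrt_le_D)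
        thus ?thesis unfolding J_def by simp
      qed
    qed
    have "I1 \<le> y\<^sup>2 * (vp - 0)" unfolding I1_def
      by (rule avg_bound[OF vp(1)]) (simp_all add: \<open>\<And>v. v \<in> {0<..vp} \<Longrightarrow> v * (g v - um) \<le> y\<^sup>2\<close>)
    hence "I1 / vp \<le> y\<^sup>2" using vp(1) by (simp add: field_simps)
    hence "sqrt (I1 / vp) \<le> sqrt (y\<^sup>2)" by (rule real_sqrt_le_mono)
    hence "sqrt (I1 / vp) \<le> - y" using y(2) by simp
    thus False using y(1) a_def by simp
  qed
  then obtain vl where vl: "vl \<in> {0<..<vp}" "- sqrt (J vl) < y" by blast
  define I2 where "I2 = integral {beta..vm} (\<lambda>V. (vm - V)\<^sup>2 * Inf (g' ` {V<..vm}))"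
  define b where "b = sqrt (I2 / (vm - beta))"
  define r0 where "r0 = um / g 0"
  have r0: "r0 < 1" "r0 > 0" using um_up0 g0 um_pos by (auto simp: r0_def field_simps)
  have B0: "B 0 = (1 - r0) * k + r0 * phi 0" by (simp add: B_def k_def r0_def algebra_simps)
  have "s < s2" using s_up by simp
  hence "k < inverse (1 - r0) * (phi b - r0 * phi 0)"
    using chi_pos by (simp add: s2_def k_def r0_def b_def I2_def field_simps)
  hence "(1 - r0) * k < phi b - r0 * phi 0"
    using r0 by (simp add: field_simps)
  hence B02: "B 0 < phi b" using B0 by simp
  have "(1 - r0) * (k - phi 0) > 0" using r0 kgt by simp
  hence B01: "phi 0 < B 0" using B0 by (simp add: algebra_simps)
  obtain z where z: "0 < z" "z < b" "inv phi (B 0) = z" using ivt[OF B01 B02] by blast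
  have "\<exists>v\<in>{beta<..<vm}. z < sqrt (Q v)"
  proof (rule ccontr)
    assume "\<not> ?thesis"
    hence H: "\<And>v. v \<in> {beta<..<vm} \<Longrightarrow> sqrt (Q v) \<le> z" by force
    have "\<And>v. v \<in> {beta<..vm} \<Longrightarrow> (vm - v)\<^sup>2 * Inf (g' ` {v<..vm}) \<le> z\<^sup>2"
    proof -
      fix v assume v: "v \<in> {beta<..vm}"
      show "(vm - v)\<^sup>2 * Inf (g' ` {v<..vm}) \<le> z\<^sup>2"
      proof (cases "v = vm")
        case True then show ?thesis by simp
      next
        case False
        hence "sqrt (Q v) \<le> z" using H v by auto
        hence "Q v \<le> z\<^sup>2" by (rule sqrt_le_D)
        thus ?thesis unfolding Q_def by simp
      qed
    qed
    have "I2 \<le> z\<^sup>2 * (vm - beta)" unfolding I2_def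
      by (rule avg_bound[OF vm(1)]) (simp_all add: \<open>\<And>v. v \<in> {beta<..vm} \<Longrightarrow> (vm - v)\<^sup>2 * Inf (g' ` {v<..vm}) \<le> z\<^sup>2\<close>)
    hence "I2 / (vm - beta) \<le> z\<^sup>2" using vm(1) by (simp add: field_simps)
    hence "b \<le> sqrt (z\<^sup>2)" unfolding b_def by (rule real_sqrt_le_mono)
    hence "b \<le> z" using z(1) by simp
    thus False using z(2) by simp
  qed
  then obtain vu where vu: "vu \<in> {beta<..<vm}" "z < sqrt (Q vu)" by blast
  show ?thesis using vl vu y z by blast
qed

end
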